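(* Let $\kappa>1$, $\alpha\in(0,1)$, and on $E=\mathbb R$ with $d(x,y)=|x-y|$ let $$q(x,y)=\frac{e^{|y|^\kappa}}{|x-y|^{1+\alpha}}1_{\{|x-y|\le1\}},\qquad \mu(\mathrm dx)=c_\kappa e^{-|x|^\kappa}\mathrm dx,$$ with $c_\kappa$ the normalizing constant making $\mu$ a probability measure. Let $H>4$, $L>\frac{\kappa H^\kappa}{H-2}$ and $$V(x)=K_0+L\sum_{n=1}^\infty 1_{[nH,(n+1)H)}(x)(n+1)^{\kappa-1}\Big(2n+1-\frac{2x}{H}\Big),$$ where $K_0\in\mathbb R$ is such that $\mu(e^V)=1$. Then there exist constants $C_1>0$ and $K\in\mathbb R$ such that $$-C_1(1+|x|^{\kappa-1})-K\le V(x)\le C_1(1+|x|^{\kappa-1})+K,\qquad x\in\mathbb R;$$ however, for every $C>0$ the Poincaré inequality $$\mu_V(f^2)\le C\,\mathcal E_V(f)+\mu_V(f)^2,\qquad f\in\mathcal D(\mathcal E_V),$$ fails.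
   Context: For $f,g$ bounded measurable, $\Gamma(f,g)(x)=\int(f(x)-f(y))(g(x)-g(y))q(x,y)\mu(\mathrm dy)$; $\mathcal A$ is the set of bounded measurable $f$ with $\Gamma(f,f)$ bounded. $\mu_V(\mathrm dx)=e^{V(x)}\mu(\mathrm dx)$, and $(\mathcal E_V,\mathcal D(\mathcal E_V))$ is the closure in $L^2(\mu_V)$ of the form $\mathcal E_V(f,g)=\int\Gamma(f,g)\,\mathrm d\mu_V$ on $\mathcal A$; $\mathcal E_V(f)=\mathcal E_V(f,f)$. *)

theory Defs
  imports "HOL-Analysis.Analysis"
begin

definition c_kappa :: "real \<Rightarrow> real" where
  "c_kappa \<kappa> = inverse (LINT x|lborel. exp (- (\<bar>x\<bar> powr \<kappa>)))"

definition mu :: "real \<Rightarrow> real measure" where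
  "mu \<kappa> = density lborel (\<lambda>x. ennreal (c_kappa \<kappa> * exp (- (\<bar>x\<bar> powr \<kappa>))))"

definition qker :: "real \<Rightarrow> real \<Rightarrow> real \<Rightarrow> real \<Rightarrow> real" where
  "qker \<kappa> \<alpha> x y = exp (\<bar>y\<bar> powr \<kappa>) / \<bar>x - y\<bar> powr (1 + \<alpha>) * indicator {..1} \<bar>x - y\<bar>"

definition Gamma :: "real measure \<Rightarrow> (real \<Rightarrow> real \<Rightarrow> real) \<Rightarrow> (real \<Rightarrow> real) \<Rightarrow> (real \<Rightarrow> real) \<Rightarrow> real \<Rightarrow> real" where
  "Gamma M q f g x = (LINT y|M. (f x - f y) * (g x - g y) * q x y)"

definition classA :: "real measure \<Rightarrow> (real \<Rightarrow> real \<Rightarrow> real) \<Rightarrow> (real \<Rightarrow> real) set" where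
  "classA M q = {f. f \<in> borel_measurable borel \<and> bounded (range f)
      \<and> (\<forall>x. integrable M (\<lambda>y. (f x - f y) * (f x - f y) * q x y))
      \<and> bounded (range (Gamma M q f f))}"

definition Vpot :: "real \<Rightarrow> real \<Rightarrow> real \<Rightarrow> real \<Rightarrow> real \<Rightarrow> real" where
  "Vpot \<kappa> H L K0 x = K0 + L * (\<Sum>n. if n \<ge> 1 then indicator {real n * H ..< (real n + 1) * H} x
        * (real n + 1) powr (\<kappa> - 1) * (2 * real n + 1 - 2 * x / H) else 0)"

definition muV :: "real measure \<Rightarrow> (real \<Rightarrow> real) \<Rightarrow> real measure" where
  "muV M V = density M (\<lambda>x. ennreal (exp (V x)))"

definition EV :: "real measure \<Rightarrow> (real \<Rightarrow> real \<Rightarrow> real) \<Rightarrow> (real \<Rightarrow> real) \<Rightarrow> (real \<Rightarrow> real) \<Rightarrow> real" where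
  "EV M q V f = (LINT x|muV M V. Gamma M q f f x)"

text \<open>Closure in L^2(N) of a quadratic form E defined on a class A:
  form_closure N A E f c  means  f belongs to the domain of the closure and its
  closed-form value is c, i.e. there are f_n in A with f_n \<rightarrow> f in L^2(N),
  (f_n) E-Cauchy, and E(f_n) \<rightarrow> c.\<close>
definition form_closure :: "real measure \<Rightarrow> (real \<Rightarrow> real) set \<Rightarrow> ((real \<Rightarrow> real) \<Rightarrow> real)
    \<Rightarrow> (real \<Rightarrow> real) \<Rightarrow> real \<Rightarrow> bool" where
  "form_closure N A E f c \<longleftrightarrow>
     f \<in> borel_measurable N \<and> integrable N (\<lambda>x. (f x)\<^sup>2) \<and>
     (\<exists>s. (\<forall>n. s n \<in> A) \<and>
        (\<lambda>n. LINT x|N. (s n x - f x)\<^sup>2) \<longlonglongrightarrow> 0 \<and>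
        (\<forall>e>0. \<exists>N0. \<forall>m\<ge>N0. \<forall>n\<ge>N0. E (\<lambda>x. s n x - s m x) < e) \<and>
        (\<lambda>n. E (s n)) \<longlonglongrightarrow> c)"

end

theory Submission
  imports Defs
begin



lemma Vpot_eval:
  fixes m :: nat
  assumes H: "H > 0" and m: "m \<ge> 1" and x1: "real m * H \<le> x" and x2: "x < (real m + 1) * H"
  shows "Vpot \<kappa> H L K0 x = K0 + L * ((real m + 1) powr (\<kappa> - 1) * (2 * real m + 1 - 2 * x / H))"
proof -
  let ?g = "\<lambda>n::nat. if n \<ge> 1 then indicator {real n * H ..< (real n + 1) * H} x
        * (real n + 1) powr (\<kappa> - 1) * (2 * real n + 1 - 2 * x / H) else (0::real)"
  have eq: "?g = (\<lambda>n. if n = m then ?g m else 0)"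
  proof
    fix n show "?g n = (if n = m then ?g m else 0)"
    proof (cases "n = m")
      case False
      have "x \<notin> {real n * H ..< (real n + 1) * H}"
      proof
        assume "x \<in> {real n * H ..< (real n + 1) * H}"
        hence a: "real n * H < (real m + 1) * H" "real m * H < (real n + 1) * H" using x1 x2 by auto
        from a(1) H have "real n < real m + 1" by (simp add: mult_less_cancel_right)
        moreover from a(2) H have "real m < real n + 1" by (simp add: mult_less_cancel_right)
        ultimately show False using False by linarith
      qed
      thus ?thesis using False by (simp add: indicator_def)
    qed simp
  qed
  have "?g sums ?g m" by (subst eq) (rule sums_single)
  hence "(\<Sum>n. ?g n) = ?g m" by (rule sums_unique[symmetric])
  moreover have "?g m = (real m + 1) powr (\<kappa> - 1) * (2 * real m + 1 - 2 * x / H)"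
    using m x1 x2 by (simp add: indicator_def)
  ultimately show ?thesis unfolding Vpot_def by simp
qed

lemma Vpot_low:
  assumes H: "H > 0" and x: "x < H"
  shows "Vpot \<kappa> H L K0 x = K0"
proof -
  have "\<And>n::nat. n \<ge> 1 \<Longrightarrow> x \<notin> {real n * H ..< (real n + 1) * H}"
  proof -
    fix n :: nat assume "n \<ge> 1"
    hence "H \<le> real n * H" using H by simp
    thus "x \<notin> {real n * H ..< (real n + 1) * H}" using x by auto
  qed
  hence "\<And>n::nat. (if n \<ge> 1 then indicator {real n * H ..< (real n + 1) * H} x
        * (real n + 1) powr (\<kappa> - 1) * (2 * real n + 1 - 2 * x / H) else (0::real)) = 0"
    by (simp add: indicator_def)
  thus ?thesis unfolding Vpot_def by simp
qed

definition Vc :: "real \<Rightarrow> real \<Rightarrow> real \<Rightarrow> real \<Rightarrow> real \<Rightarrow> real" where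
  "Vc \<kappa> H L K0 x = (if x < H then K0 else K0 + L * ((of_int \<lfloor>x / H\<rfloor> + 1) powr (\<kappa> - 1)
      * (2 * of_int \<lfloor>x / H\<rfloor> + 1 - 2 * x / H)))"

lemma Vpot_Vc:
  assumes H: "H > 0"
  shows "Vpot \<kappa> H L K0 = Vc \<kappa> H L K0"
proof
  fix x
  show "Vpot \<kappa> H L K0 x = Vc \<kappa> H L K0 x"
  proof (cases "x < H")
    case True thus ?thesis using Vpot_low[OF H] by (simp add: Vc_def)
  next
    case False
    define m where "m = nat \<lfloor>x / H\<rfloor>"
    have "1 \<le> x / H" using False H by simp
    hence fl: "1 \<le> \<lfloor>x / H\<rfloor>" by linarith
    hence mr: "real m = of_int \<lfloor>x / H\<rfloor>" unfolding m_def by simp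
    have f1: "of_int \<lfloor>x / H\<rfloor> \<le> x / H" and f2: "x / H < of_int \<lfloor>x / H\<rfloor> + 1" by linarith+
    have "real m * H \<le> x" using f1 H mr by (metis pos_le_divide_eq)
    moreover have "x < (real m + 1) * H" using f2 H mr by (metis pos_divide_less_eq)
    ultimately have "real m * H \<le> x" "x < (real m + 1) * H" by auto
    moreover have "m \<ge> 1" using fl m_def by linarith
    ultimately show ?thesis using Vpot_eval[OF H] False mr by (simp add: Vc_def)
  qed
qed

lemma Vc_measurable[measurable]: "Vc \<kappa> H L K0 \<in> borel_measurable borel"
  unfolding Vc_def by measurable

lemma part1:
  assumes H: "H > 4" and L: "L > 0" and k: "\<kappa> > 1"
  shows "\<exists>C1>0. \<exists>K. \<forall>x::real.
            - C1 * (1 + \<bar>x\<bar> powr (\<kappa> - 1)) - K \<le> Vpot \<kappa> H L K0 x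
          \<and> Vpot \<kappa> H L K0 x \<le> C1 * (1 + \<bar>x\<bar> powr (\<kappa> - 1)) + K"
proof -
 have key: "\<bar>Vpot \<kappa> H L K0 x - K0\<bar> \<le> L * \<bar>x\<bar> powr (\<kappa> - 1)" for x
 proof -
  show "\<bar>Vpot \<kappa> H L K0 x - K0\<bar> \<le> L * \<bar>x\<bar> powr (\<kappa> - 1)"
  proof (cases "x < H")
    case True thus ?thesis using Vpot_low[of H x] H L by simp
  next
    case False
    define m where "m = nat \<lfloor>x / H\<rfloor>"
    have "1 \<le> x / H" using False H by simp
    hence fl: "1 \<le> \<lfloor>x / H\<rfloor>" by linarith
    hence mr: "real m = of_int \<lfloor>x / H\<rfloor>" unfolding m_def by simp
    have f1: "of_int \<lfloor>x / H\<rfloor> \<le> x / H" and f2: "x / H < of_int \<lfloor>x / H\<rfloor> + 1" by linarith+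
    have "real m * H \<le> x" using f1 H mr by (metis pos_le_divide_eq dual_order.strict_trans zero_less_numeral)
    moreover have "x < (real m + 1) * H" using f2 H mr by (metis pos_divide_less_eq dual_order.strict_trans zero_less_numeral)
    ultimately have x1: "real m * H \<le> x" and x2: "x < (real m + 1) * H" by auto
    have m1: "m \<ge> 1" using fl m_def by linarith
    have e: "Vpot \<kappa> H L K0 x - K0 = L * ((real m + 1) powr (\<kappa> - 1) * (2 * real m + 1 - 2 * x / H))"
      using Vpot_eval[OF _ m1 x1 x2] H by simp
    have "2 * real m \<le> 2 * x / H" using x1 H by (simp add: field_simps)
    moreover have "2 * x / H < 2 * real m + 2" using x2 H by (simp add: field_simps)
    ultimately have b: "\<bar>2 * real m + 1 - 2 * x / H\<bar> \<le> 1" by linarith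
    have "real m + 1 \<le> x"
    proof -
      have "real m * 4 \<le> real m * H" using H by (intro mult_left_mono) auto
      thus ?thesis using x1 m1 by linarith
    qed
    hence p: "(real m + 1) powr (\<kappa> - 1) \<le> \<bar>x\<bar> powr (\<kappa> - 1)"
      using k by (intro powr_mono2) auto
    have "\<bar>Vpot \<kappa> H L K0 x - K0\<bar> = L * ((real m + 1) powr (\<kappa> - 1) * \<bar>2 * real m + 1 - 2 * x / H\<bar>)"
      using L by (simp add: e abs_mult)
    also have "\<dots> \<le> L * ((real m + 1) powr (\<kappa> - 1) * 1)"
      using b L by (intro mult_left_mono) auto
    also have "\<dots> \<le> L * \<bar>x\<bar> powr (\<kappa> - 1)" using p L by simp
    finally show ?thesis .
  qed
  qed
  have "- L * (1 + \<bar>x\<bar> powr (\<kappa> - 1)) - \<bar>K0\<bar> \<le> Vpot \<kappa> H L K0 x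
     \<and> Vpot \<kappa> H L K0 x \<le> L * (1 + \<bar>x\<bar> powr (\<kappa> - 1)) + \<bar>K0\<bar>" for x
    using key[of x] L by (auto simp: algebra_simps abs_le_iff)
  thus ?thesis using L by blast
qed




lemma clamp_lip:
  fixes p q p' q' :: real
  shows "\<bar>max 0 (min 1 (min p q)) - max 0 (min 1 (min p' q'))\<bar> \<le> max \<bar>p - p'\<bar> \<bar>q - q'\<bar>"
proof -
  have c1: "\<bar>max 0 (min 1 t) - max 0 (min 1 s)\<bar> \<le> \<bar>t - s\<bar>" for t s :: real
    by (cases "t \<le> s") (auto simp: max_def min_def abs_if)
  have c2: "\<bar>min p q - min p' q'\<bar> \<le> max \<bar>p - p'\<bar> \<bar>q - q'\<bar>"
    by (auto simp: max_def min_def abs_if)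
  show ?thesis using c1[of "min p q" "min p' q'"] c2 by linarith
qed

definition fn :: "real \<Rightarrow> real \<Rightarrow> real \<Rightarrow> real \<Rightarrow> real" where
  "fn a b \<delta> y = max 0 (min 1 (min ((y - a) / \<delta>) ((b - y) / \<delta>)))"

lemma fn_meas[measurable]: "fn a b \<delta> \<in> borel_measurable borel"
  unfolding fn_def by measurable

lemma fn_lip:
  assumes "\<delta> > 0"
  shows "\<bar>fn a b \<delta> x - fn a b \<delta> y\<bar> \<le> \<bar>x - y\<bar> / \<delta>"
proof -
  have "\<bar>fn a b \<delta> x - fn a b \<delta> y\<bar> \<le> max \<bar>(x - a) / \<delta> - (y - a) / \<delta>\<bar> \<bar>(b - x) / \<delta> - (b - y) / \<delta>\<bar>"
    unfolding fn_def by (rule clamp_lip)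
  also have "\<dots> = \<bar>x - y\<bar> / \<delta>" using assms
    by (simp add: diff_divide_distrib[symmetric] abs_minus_commute)
  finally show ?thesis .
qed

lemma fn_range: "0 \<le> fn a b \<delta> y" "fn a b \<delta> y \<le> 1"
  unfolding fn_def by auto

lemma clamp0: "p \<le> 0 \<or> q \<le> 0 \<Longrightarrow> max 0 (min 1 (min p q)) = (0::real)"
  by (auto simp: max_def min_def)

lemma fn_zero1: "\<delta> > 0 \<Longrightarrow> y \<le> a \<Longrightarrow> fn a b \<delta> y = 0"
  unfolding fn_def by (rule clamp0) (simp add: divide_nonpos_pos)

lemma fn_zero2: "\<delta> > 0 \<Longrightarrow> b \<le> y \<Longrightarrow> fn a b \<delta> y = 0"
  unfolding fn_def by (rule clamp0) (simp add: divide_nonpos_pos)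

lemma fn_one: "\<delta> > 0 \<Longrightarrow> a + \<delta> \<le> y \<Longrightarrow> y \<le> b - \<delta> \<Longrightarrow> fn a b \<delta> y = 1"
  unfolding fn_def by (auto simp: min_def max_def le_divide_eq)

lemma kernel_bound:
  fixes c d x y \<delta> :: real
  assumes d: "\<bar>d\<bar> \<le> \<bar>x - y\<bar> / \<delta>" and \<delta>: "\<delta> > 0" and a: "0 < \<alpha>" "\<alpha> < 1" and c: "c \<ge> 0"
  shows "0 \<le> c * exp (- (\<bar>y\<bar> powr \<kappa>)) * (d * d * qker \<kappa> \<alpha> x y)"
    and "c * exp (- (\<bar>y\<bar> powr \<kappa>)) * (d * d * qker \<kappa> \<alpha> x y) \<le> c / \<delta>\<^sup>2 * indicator {x - 1 .. x + 1} y"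
proof -
  show "0 \<le> c * exp (- (\<bar>y\<bar> powr \<kappa>)) * (d * d * qker \<kappa> \<alpha> x y)"
    using c by (auto simp: qker_def intro!: mult_nonneg_nonneg divide_nonneg_nonneg)
  show "c * exp (- (\<bar>y\<bar> powr \<kappa>)) * (d * d * qker \<kappa> \<alpha> x y) \<le> c / \<delta>\<^sup>2 * indicator {x - 1 .. x + 1} y"
  proof (cases "\<bar>x - y\<bar> \<le> 1 \<and> x \<noteq> y")
    case False
    then consider "\<not> \<bar>x - y\<bar> \<le> 1" | "x = y" by blast
    thus ?thesis
    proof cases
      case 1 thus ?thesis using c by (auto simp: qker_def indicator_def abs_le_iff)
    next
      case 2 thus ?thesis using c by (simp add: qker_def indicator_def)
    qed
  next
    case True
    define t where "t = \<bar>x - y\<bar>"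
    have t: "0 < t" "t \<le> 1" using True t_def by auto
    have ind: "indicator {x - 1 .. x + 1} y = (1::real)" using True by (auto simp: indicator_def abs_le_iff)
    have q: "qker \<kappa> \<alpha> x y = exp (\<bar>y\<bar> powr \<kappa>) / t powr (1 + \<alpha>)"
      using True by (simp add: qker_def t_def)
    have e: "exp (- (\<bar>y\<bar> powr \<kappa>)) * exp (\<bar>y\<bar> powr \<kappa>) = 1" by (simp add: exp_minus field_simps)
    have "c * exp (- (\<bar>y\<bar> powr \<kappa>)) * (d * d * qker \<kappa> \<alpha> x y) = c * (d * d) / t powr (1 + \<alpha>)"
      unfolding q using e by (simp add: field_simps)
    also have "\<dots> \<le> c * (t\<^sup>2 / \<delta>\<^sup>2) / t powr (1 + \<alpha>)"
    proof -
      have "\<bar>d\<bar> \<le> t / \<delta>" using d t_def by simp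
      hence "\<bar>d\<bar> * \<bar>d\<bar> \<le> (t / \<delta>) * (t / \<delta>)" by (intro mult_mono) auto
      hence "d * d \<le> (t / \<delta>) * (t / \<delta>)" by (simp add: abs_mult_self_eq)
      hence "d * d \<le> t\<^sup>2 / \<delta>\<^sup>2" by (simp add: power2_eq_square)
      thus ?thesis using c t by (intro divide_right_mono mult_left_mono) auto
    qed
    also have "\<dots> \<le> c / \<delta>\<^sup>2"
    proof -
      have "t\<^sup>2 = t powr 2" using t by (simp add: powr_numeral)
      also have "\<dots> \<le> t powr (1 + \<alpha>)" using t a by (intro powr_mono') auto
      finally have "t\<^sup>2 / t powr (1 + \<alpha>) \<le> 1" using t by simp
      hence "c / \<delta>\<^sup>2 * (t\<^sup>2 / t powr (1 + \<alpha>)) \<le> c / \<delta>\<^sup>2 * 1" using c \<delta>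
        by (intro mult_left_mono) auto
      thus ?thesis by (simp add: field_simps)
    qed
    finally show ?thesis using ind by simp
  qed
qed




lemma powdiff:
  fixes u w \<kappa> :: real
  assumes w: "0 < w" "w \<le> u" and k: "\<kappa> \<ge> 1"
  shows "u powr \<kappa> - w powr \<kappa> \<le> \<kappa> * u powr (\<kappa> - 1) * (u - w)"
proof (cases "w = u")
  case True thus ?thesis by simp
next
  case False
  hence lt: "w < u" using w by simp
  have "\<And>x. w \<le> x \<Longrightarrow> x \<le> u \<Longrightarrow> DERIV (\<lambda>t. t powr \<kappa>) x :> \<kappa> * x powr (\<kappa> - 1)"
    using w by (intro has_real_derivative_powr) auto
  from MVT2[OF lt this] obtain z where z: "w < z" "z < u"
    "u powr \<kappa> - w powr \<kappa> = (u - w) * (\<kappa> * z powr (\<kappa> - 1))" by blast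
  have "z powr (\<kappa> - 1) \<le> u powr (\<kappa> - 1)" using z w k by (intro powr_mono2) auto
  hence "(u - w) * (\<kappa> * z powr (\<kappa> - 1)) \<le> (u - w) * (\<kappa> * u powr (\<kappa> - 1))"
    using lt k by (intro mult_left_mono) auto
  thus ?thesis using z by (simp add: algebra_simps)
qed

locale P25 =
  fixes \<kappa> \<alpha> H L K0 :: real
  assumes k: "\<kappa> > 1" and a0: "0 < \<alpha>" and a1: "\<alpha> < 1"
    and H: "H > 4" and L: "L > \<kappa> * H powr \<kappa> / (H - 2)"
    and I: "(LINT x|mu \<kappa>. exp (Vpot \<kappa> H L K0 x)) = 1"
begin

abbreviation NN where "NN \<equiv> muV (mu \<kappa>) (Vpot \<kappa> H L K0)"

lemma H0: "H > 0" using H by simp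

lemma Lpos: "L > 0"
proof -
  have "0 < \<kappa> * H powr \<kappa> / (H - 2)" using k H by (intro divide_pos_pos mult_pos_pos) auto
  thus ?thesis using L by linarith
qed

lemma V_meas[measurable]: "Vpot \<kappa> H L K0 \<in> borel_measurable borel"
  using Vpot_Vc[OF H0] Vc_measurable by simp

lemma sets_mu[measurable_cong]: "sets (mu \<kappa>) = sets borel"
  by (simp add: mu_def)

lemma sets_N[measurable_cong]: "sets (muV (mu \<kappa>) (Vpot \<kappa> H L K0)) = sets borel"
  by (simp add: muV_def mu_def)

lemma space_N[simp]: "space (muV (mu \<kappa>) (Vpot \<kappa> H L K0)) = UNIV"
  by (simp add: muV_def mu_def)

lemma c_nonneg: "c_kappa \<kappa> \<ge> 0"
  unfolding c_kappa_def by simp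

lemma int_mu:
  assumes [measurable]: "h \<in> borel_measurable borel"
  shows "integral\<^sup>L (mu \<kappa>) h = (LINT x|lborel. c_kappa \<kappa> * exp (- (\<bar>x\<bar> powr \<kappa>)) * h x)"
    and "integrable (mu \<kappa>) h \<longleftrightarrow> integrable lborel (\<lambda>x. c_kappa \<kappa> * exp (- (\<bar>x\<bar> powr \<kappa>)) * h x)"
  unfolding mu_def using c_nonneg
  by (subst integral_density integrable_density; auto)+

lemma c_pos: "c_kappa \<kappa> > 0"
proof (rule ccontr)
  assume "\<not> c_kappa \<kappa> > 0"
  hence "c_kappa \<kappa> = 0" using c_nonneg by simp
  hence "(LINT x|mu \<kappa>. exp (Vpot \<kappa> H L K0 x)) = 0" by (subst int_mu) auto
  thus False using I by simp
qed

lemma expV_int: "integrable (mu \<kappa>) (\<lambda>x. exp (Vpot \<kappa> H L K0 x))"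
  using I not_integrable_integral_eq by fastforce

lemma int_N:
  assumes [measurable]: "h \<in> borel_measurable borel" and B: "\<And>x. \<bar>h x\<bar> \<le> B"
  shows "integrable (muV (mu \<kappa>) (Vpot \<kappa> H L K0)) h"
    and "integrable lborel (\<lambda>x. c_kappa \<kappa> * exp (- (\<bar>x\<bar> powr \<kappa>)) * (exp (Vpot \<kappa> H L K0 x) * h x))"
    and "integral\<^sup>L (muV (mu \<kappa>) (Vpot \<kappa> H L K0)) h
        = (LINT x|lborel. c_kappa \<kappa> * exp (- (\<bar>x\<bar> powr \<kappa>)) * (exp (Vpot \<kappa> H L K0 x) * h x))"
proof -
  have B0: "0 \<le> B" using B[of 0] by linarith
  have im: "integrable (mu \<kappa>) (\<lambda>x. exp (Vpot \<kappa> H L K0 x) * h x)"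
  proof (rule Bochner_Integration.integrable_bound)
    show "integrable (mu \<kappa>) (\<lambda>x. B * exp (Vpot \<kappa> H L K0 x))" using expV_int by simp
    show "(\<lambda>x. exp (Vpot \<kappa> H L K0 x) * h x) \<in> borel_measurable (mu \<kappa>)" by measurable
    show "AE x in mu \<kappa>. norm (exp (Vpot \<kappa> H L K0 x) * h x) \<le> norm (B * exp (Vpot \<kappa> H L K0 x))"
      using B B0 by (auto simp: abs_mult mult.commute intro!: mult_right_mono)
  qed
  show "integrable (muV (mu \<kappa>) (Vpot \<kappa> H L K0)) h"
    unfolding muV_def by (subst integrable_density) (use im in auto)
  show "integrable lborel (\<lambda>x. c_kappa \<kappa> * exp (- (\<bar>x\<bar> powr \<kappa>)) * (exp (Vpot \<kappa> H L K0 x) * h x))"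
    using im by (subst (asm) int_mu(2)) auto
  have "integral\<^sup>L (muV (mu \<kappa>) (Vpot \<kappa> H L K0)) h = integral\<^sup>L (mu \<kappa>) (\<lambda>x. exp (Vpot \<kappa> H L K0 x) * h x)"
    unfolding muV_def by (subst integral_density) auto
  also have "\<dots> = (LINT x|lborel. c_kappa \<kappa> * exp (- (\<bar>x\<bar> powr \<kappa>)) * (exp (Vpot \<kappa> H L K0 x) * h x))"
    by (subst int_mu(1)) auto
  finally show "integral\<^sup>L (muV (mu \<kappa>) (Vpot \<kappa> H L K0)) h
        = (LINT x|lborel. c_kappa \<kappa> * exp (- (\<bar>x\<bar> powr \<kappa>)) * (exp (Vpot \<kappa> H L K0 x) * h x))" .
qed

lemma finN: "finite_measure (muV (mu \<kappa>) (Vpot \<kappa> H L K0))"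
proof
  have "emeasure (muV (mu \<kappa>) (Vpot \<kappa> H L K0)) (space (muV (mu \<kappa>) (Vpot \<kappa> H L K0)))
      = (\<integral>\<^sup>+ x. ennreal (exp (Vpot \<kappa> H L K0 x)) \<partial>mu \<kappa>)"
    unfolding muV_def by (subst emeasure_density) (auto simp: mu_def)
  also have "\<dots> = ennreal (LINT x|mu \<kappa>. exp (Vpot \<kappa> H L K0 x))"
    using expV_int by (intro nn_integral_eq_integral) auto
  finally show "emeasure (muV (mu \<kappa>) (Vpot \<kappa> H L K0)) (space (muV (mu \<kappa>) (Vpot \<kappa> H L K0))) \<noteq> \<infinity>"
    by simp
qed

lemma qker_meas[measurable]: "qker \<kappa> \<alpha> x \<in> borel_measurable borel"
  unfolding qker_def by measurable

lemma Gamma_fn: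
  assumes \<delta>: "\<delta> > 0"
  shows "integrable (mu \<kappa>) (\<lambda>y. (fn a b \<delta> x - fn a b \<delta> y) * (fn a b \<delta> x - fn a b \<delta> y) * qker \<kappa> \<alpha> x y)"
    and "0 \<le> Gamma (mu \<kappa>) (qker \<kappa> \<alpha>) (fn a b \<delta>) (fn a b \<delta>) x"
    and "Gamma (mu \<kappa>) (qker \<kappa> \<alpha>) (fn a b \<delta>) (fn a b \<delta>) x \<le> 2 * c_kappa \<kappa> / \<delta>\<^sup>2"
proof -
  let ?f = "fn a b \<delta>"
  let ?c = "c_kappa \<kappa>"
  let ?g = "\<lambda>y. ?c * exp (- (\<bar>y\<bar> powr \<kappa>)) * ((?f x - ?f y) * (?f x - ?f y) * qker \<kappa> \<alpha> x y)"
  have kb: "0 \<le> ?g y" "?g y \<le> ?c / \<delta>\<^sup>2 * indicator {x - 1 .. x + 1} y" for y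
    using kernel_bound[OF fn_lip[OF \<delta>, of a b x y] \<delta> a0 a1 c_nonneg] by auto
  have ib: "integrable lborel (\<lambda>y. ?c / \<delta>\<^sup>2 * indicator {x - 1 .. x + 1} y)"
    by (intro integrable_mult_right integrable_real_indicator) auto
  have ig: "integrable lborel ?g"
  proof (rule Bochner_Integration.integrable_bound[OF ib])
    show "?g \<in> borel_measurable lborel" by measurable
    show "AE y in lborel. norm (?g y) \<le> norm (?c / \<delta>\<^sup>2 * indicator {x - 1 .. x + 1} y)"
    proof (intro AE_I2)
      fix y
      have "norm (?g y) = ?g y" using kb(1)[of y] by simp
      also have "\<dots> \<le> ?c / \<delta>\<^sup>2 * indicator {x - 1 .. x + 1} y" by (rule kb(2))
      also have "\<dots> \<le> norm (?c / \<delta>\<^sup>2 * indicator {x - 1 .. x + 1} y)" unfolding real_norm_def by (rule abs_ge_self)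
      finally show "norm (?g y) \<le> norm (?c / \<delta>\<^sup>2 * indicator {x - 1 .. x + 1} y)" .
    qed
  qed
  show "integrable (mu \<kappa>) (\<lambda>y. (?f x - ?f y) * (?f x - ?f y) * qker \<kappa> \<alpha> x y)"
    using ig by (subst int_mu(2)) auto
  have G: "Gamma (mu \<kappa>) (qker \<kappa> \<alpha>) ?f ?f x = integral\<^sup>L lborel ?g"
    unfolding Gamma_def by (subst int_mu(1)) auto
  show "0 \<le> Gamma (mu \<kappa>) (qker \<kappa> \<alpha>) ?f ?f x" unfolding G using kb by simp
  have "integral\<^sup>L lborel ?g \<le> integral\<^sup>L lborel (\<lambda>y. ?c / \<delta>\<^sup>2 * indicator {x - 1 .. x + 1} y)"
    using ig ib kb by (intro integral_mono) auto
  also have "\<dots> = 2 * ?c / \<delta>\<^sup>2" by simp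
  finally show "Gamma (mu \<kappa>) (qker \<kappa> \<alpha>) ?f ?f x \<le> 2 * c_kappa \<kappa> / \<delta>\<^sup>2" unfolding G .
qed

end



context P25 begin

lemma fn_classA:
  assumes \<delta>: "\<delta> > 0"
  shows "fn a b \<delta> \<in> classA (mu \<kappa>) (qker \<kappa> \<alpha>)"
  unfolding classA_def
proof (intro CollectI conjI allI)
  show "fn a b \<delta> \<in> borel_measurable borel" by measurable
  show "bounded (range (fn a b \<delta>))" unfolding bounded_real
    using fn_range by (intro exI[of _ 1]) (auto simp: abs_le_iff intro: order_trans[of _ 0])
  show "integrable (mu \<kappa>) (\<lambda>y. (fn a b \<delta> x - fn a b \<delta> y) * (fn a b \<delta> x - fn a b \<delta> y) * qker \<kappa> \<alpha> x y)" for x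
    by (rule Gamma_fn(1)[OF \<delta>])
  show "bounded (range (Gamma (mu \<kappa>) (qker \<kappa> \<alpha>) (fn a b \<delta>) (fn a b \<delta>)))" unfolding bounded_real
  proof (intro exI[of _ "2 * c_kappa \<kappa> / \<delta>\<^sup>2"] ballI)
    fix z assume "z \<in> range (Gamma (mu \<kappa>) (qker \<kappa> \<alpha>) (fn a b \<delta>) (fn a b \<delta>))"
    then obtain x where x: "z = Gamma (mu \<kappa>) (qker \<kappa> \<alpha>) (fn a b \<delta>) (fn a b \<delta>) x" by auto
    show "\<bar>z\<bar> \<le> 2 * c_kappa \<kappa> / \<delta>\<^sup>2" using Gamma_fn(2,3)[OF \<delta>, of a b x] unfolding x by linarith
  qed
qed

lemma EV_zero: "EV (mu \<kappa>) (qker \<kappa> \<alpha>) V (\<lambda>x. 0) = 0"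
  unfolding EV_def Gamma_def by simp

lemma form_closure_fn:
  assumes \<delta>: "\<delta> > 0"
  shows "form_closure NN (classA (mu \<kappa>) (qker \<kappa> \<alpha>)) (EV (mu \<kappa>) (qker \<kappa> \<alpha>) (Vpot \<kappa> H L K0))
           (fn a b \<delta>) (EV (mu \<kappa>) (qker \<kappa> \<alpha>) (Vpot \<kappa> H L K0) (fn a b \<delta>))"
  unfolding form_closure_def
proof (intro conjI exI[of _ "\<lambda>n. fn a b \<delta>"] allI impI)
  show "fn a b \<delta> \<in> borel_measurable NN" by measurable
  show "integrable NN (\<lambda>x. (fn a b \<delta> x)\<^sup>2)"
    by (rule int_N(1)[of _ 1]) (use fn_range in \<open>auto simp: abs_le_iff power_le_one\<close>)
  show "fn a b \<delta> \<in> classA (mu \<kappa>) (qker \<kappa> \<alpha>)" for n::nat by (rule fn_classA[OF \<delta>])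
  show "(\<lambda>n. LINT x|NN. (fn a b \<delta> x - fn a b \<delta> x)\<^sup>2) \<longlonglongrightarrow> 0" by simp
  show "\<exists>N0. \<forall>m\<ge>N0. \<forall>n\<ge>N0. EV (mu \<kappa>) (qker \<kappa> \<alpha>) (Vpot \<kappa> H L K0) (\<lambda>x. fn a b \<delta> x - fn a b \<delta> x) < e"
    if "e > 0" for e::real
    using that by (simp add: EV_zero)
  show "(\<lambda>n. EV (mu \<kappa>) (qker \<kappa> \<alpha>) (Vpot \<kappa> H L K0) (fn a b \<delta>))
    \<longlonglongrightarrow> EV (mu \<kappa>) (qker \<kappa> \<alpha>) (Vpot \<kappa> H L K0) (fn a b \<delta>)" by simp
qed


context
  fixes n :: nat and \<delta> :: real
  assumes n2: "n \<ge> 2" and d0: "0 < \<delta>" and d1: "\<delta> \<le> 1" and dH: "2 * \<delta> \<le> H - 4"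
begin

abbreviation "ff \<equiv> fn (real n * H - 1 - \<delta>) ((real n + 1) * H - 1) \<delta>"
abbreviation "ZZ \<equiv> {real n * H - 2 - \<delta> ..< real n * H} \<union> {(real n + 1) * H - 2 - \<delta> ..< (real n + 1) * H}"
abbreviation "PP \<equiv> {real n * H .. real n * H + \<delta>}"
abbreviation "\<theta> \<equiv> 1 - (4 + 2 * \<delta>) / H"
abbreviation "aa \<equiv> K0 - L * real n powr (\<kappa> - 1) * \<theta> - (real n * H - 2 - \<delta>) powr \<kappa>"
abbreviation "bb \<equiv> K0 + L * real n powr (\<kappa> - 1) * (1 - 2 * \<delta> / H) - (real n * H + \<delta>) powr \<kappa>"

lemma theta_nonneg: "0 \<le> \<theta>"
  using dH H0 by (simp add: field_simps)

lemma Gamma_zero: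
  assumes x: "x \<notin> ZZ"
  shows "Gamma (mu \<kappa>) (qker \<kappa> \<alpha>) ff ff x = 0"
proof -
  have "(ff x - ff y) * (ff x - ff y) * qker \<kappa> \<alpha> x y = 0" for y
  proof (cases "\<bar>x - y\<bar> \<le> 1")
    case False thus ?thesis by (simp add: qker_def)
  next
    case True
    hence y: "x - 1 \<le> y" "y \<le> x + 1" by (auto simp: abs_le_iff)
    have "real n * H \<le> (real n + 1) * H - 2 - \<delta>" using H d1 by (simp add: algebra_simps)
    hence "x < real n * H - 2 - \<delta> \<or> (real n * H \<le> x \<and> x < (real n + 1) * H - 2 - \<delta>) \<or> (real n + 1) * H \<le> x"
      using x by auto
    hence "ff x = ff y"
    proof (elim disjE conjE)
      assume "x < real n * H - 2 - \<delta>"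
      thus ?thesis using y d0 by (simp add: fn_zero1)
    next
      assume "real n * H \<le> x" "x < (real n + 1) * H - 2 - \<delta>"
      thus ?thesis using y d0 by (simp add: fn_one)
    next
      assume "(real n + 1) * H \<le> x"
      thus ?thesis using y d0 by (simp add: fn_zero2)
    qed
    thus ?thesis by simp
  qed
  hence e: "(\<lambda>y. (ff x - ff y) * (ff x - ff y) * qker \<kappa> \<alpha> x y) = (\<lambda>y. 0)" by (intro ext)
  show ?thesis unfolding Gamma_def e by simp
qed

lemma ZZ_meas[measurable]: "ZZ \<in> sets borel" by measurable

lemma EV_le: "EV (mu \<kappa>) (qker \<kappa> \<alpha>) (Vpot \<kappa> H L K0) ff \<le> 2 * c_kappa \<kappa> / \<delta>\<^sup>2 * integral\<^sup>L NN (indicator ZZ)"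
proof -
  have G0: "0 \<le> 2 * c_kappa \<kappa> / \<delta>\<^sup>2" using c_nonneg by simp
  have "EV (mu \<kappa>) (qker \<kappa> \<alpha>) (Vpot \<kappa> H L K0) ff \<le> (LINT x|NN. 2 * c_kappa \<kappa> / \<delta>\<^sup>2 * indicator ZZ x)"
    unfolding EV_def
  proof (rule integral_mono')
    show "integrable NN (\<lambda>x. 2 * c_kappa \<kappa> / \<delta>\<^sup>2 * indicator ZZ x)"
      by (rule int_N(1)[of _ "2 * c_kappa \<kappa> / \<delta>\<^sup>2"]) (use G0 in \<open>auto simp: indicator_def\<close>)
    show "Gamma (mu \<kappa>) (qker \<kappa> \<alpha>) ff ff x \<le> 2 * c_kappa \<kappa> / \<delta>\<^sup>2 * indicator ZZ x" for x
      using Gamma_zero[of x] Gamma_fn(3)[OF d0, of "real n * H - 1 - \<delta>" "(real n + 1) * H - 1" x]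
      by (cases "x \<in> ZZ") auto
    show "0 \<le> 2 * c_kappa \<kappa> / \<delta>\<^sup>2 * indicator ZZ x" for x by (intro mult_nonneg_nonneg G0) simp
  qed
  also have "\<dots> = 2 * c_kappa \<kappa> / \<delta>\<^sup>2 * integral\<^sup>L NN (indicator ZZ)" by simp
  finally show ?thesis .
qed


lemma lin_aux:
  assumes "t * H - 2 - \<delta> \<le> x"
  shows "2 * t - (4 + 2 * \<delta>) / H \<le> 2 * x / H"
proof -
  have "2 * (t * H - 2 - \<delta>) / H \<le> 2 * x / H" using assms H0 by (intro divide_right_mono) auto
  moreover have "2 * (t * H - 2 - \<delta>) / H = 2 * t - (4 + 2 * \<delta>) / H" using H0 by (simp add: field_simps)
  ultimately show ?thesis by simp
qed

lemma rho_Z: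
  assumes x: "x \<in> ZZ"
  shows "- (\<bar>x\<bar> powr \<kappa>) + Vpot \<kappa> H L K0 x \<le> aa"
proof -
  have nH: "8 \<le> real n * H"
  proof -
    have "2 * 4 \<le> real n * H" using n2 H by (intro mult_mono) auto
    thus ?thesis by simp
  qed
  have x0: "real n * H - 2 - \<delta> \<le> x" using x H by (auto simp: algebra_simps)
  have pos: "0 < real n * H - 2 - \<delta>" using nH d1 by linarith
  have p1: "(real n * H - 2 - \<delta>) powr \<kappa> \<le> \<bar>x\<bar> powr \<kappa>"
    using pos x0 k by (intro powr_mono2) auto
  have LP: "0 \<le> L * real n powr (\<kappa> - 1)" using Lpos by simp
  have V: "Vpot \<kappa> H L K0 x \<le> K0 - L * real n powr (\<kappa> - 1) * \<theta>"
  proof (cases "x < real n * H")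
    case True
    have hm: "real (n - 1) = real n - 1" using n2 by (simp add: of_nat_diff)
    have m1: "1 \<le> n - 1" using n2 by simp
    have "real (n - 1) * H \<le> x" using x0 hm H d1 by (simp add: algebra_simps)
    moreover have "x < (real (n - 1) + 1) * H" using True hm by simp
    ultimately have e: "Vpot \<kappa> H L K0 x = K0 + L * (real n powr (\<kappa> - 1) * (2 * (real n - 1) + 1 - 2 * x / H))"
      using Vpot_eval[OF H0 m1] hm by simp
    have "2 * (real n - 1) + 1 - 2 * x / H \<le> - \<theta>" using lin_aux[OF x0] by simp
    hence "L * (real n powr (\<kappa> - 1) * (2 * (real n - 1) + 1 - 2 * x / H)) \<le> L * (real n powr (\<kappa> - 1) * (- \<theta>))"
      using Lpos by (intro mult_left_mono) auto
    also have "L * (real n powr (\<kappa> - 1) * (- \<theta>)) = - (L * real n powr (\<kappa> - 1) * \<theta>)"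
      by (simp only: mult_minus_right mult.assoc)
    finally show ?thesis unfolding e by simp
  next
    case False
    hence x1: "(real n + 1) * H - 2 - \<delta> \<le> x" "x < (real n + 1) * H" using x by auto
    have n1: "1 \<le> n" using n2 by simp
    have e: "Vpot \<kappa> H L K0 x = K0 + L * ((real n + 1) powr (\<kappa> - 1) * (2 * real n + 1 - 2 * x / H))"
      using Vpot_eval[OF H0 n1 _ x1(2)] False by simp
    have "2 * real n + 1 - 2 * x / H \<le> - \<theta>" using lin_aux[OF x1(1)] by (simp add: algebra_simps)
    hence "L * ((real n + 1) powr (\<kappa> - 1) * (2 * real n + 1 - 2 * x / H)) \<le> L * ((real n + 1) powr (\<kappa> - 1) * (- \<theta>))"
      using Lpos by (intro mult_left_mono) auto
    also have "\<dots> \<le> L * (real n powr (\<kappa> - 1) * (- \<theta>))"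
    proof -
      have "real n powr (\<kappa> - 1) \<le> (real n + 1) powr (\<kappa> - 1)" using k by (intro powr_mono2) auto
      hence "real n powr (\<kappa> - 1) * \<theta> \<le> (real n + 1) powr (\<kappa> - 1) * \<theta>"
        using theta_nonneg by (intro mult_right_mono) auto
      hence "(real n + 1) powr (\<kappa> - 1) * (- \<theta>) \<le> real n powr (\<kappa> - 1) * (- \<theta>)"
        by (simp only: mult_minus_right neg_le_iff_le)
      thus ?thesis using Lpos by (intro mult_left_mono) auto
    qed
    also have "L * (real n powr (\<kappa> - 1) * (- \<theta>)) = - (L * real n powr (\<kappa> - 1) * \<theta>)"
      by (simp only: mult_minus_right mult.assoc)
    finally show ?thesis unfolding e by simp
  qed
  show ?thesis using V p1 by simp
qed

lemma rho_P:
  assumes x: "x \<in> PP"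
  shows "bb \<le> - (\<bar>x\<bar> powr \<kappa>) + Vpot \<kappa> H L K0 x"
proof -
  have x1: "real n * H \<le> x" "x \<le> real n * H + \<delta>" using x by auto
  have x0: "0 \<le> x" using x1 H by (metis mult_nonneg_nonneg of_nat_0_le_iff order_trans H0 less_imp_le)
  have p1: "\<bar>x\<bar> powr \<kappa> \<le> (real n * H + \<delta>) powr \<kappa>"
    using x0 x1 k by (intro powr_mono2) auto
  have n1: "1 \<le> n" using n2 by simp
  have x2: "x < (real n + 1) * H" using x1 H d1 by (simp add: algebra_simps)
  have e: "Vpot \<kappa> H L K0 x = K0 + L * ((real n + 1) powr (\<kappa> - 1) * (2 * real n + 1 - 2 * x / H))"
    using Vpot_eval[OF H0 n1 x1(1) x2] by simp
  have "2 * x / H \<le> 2 * (real n * H + \<delta>) / H" using x1 H0 by (intro divide_right_mono) auto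
  also have "\<dots> = 2 * real n + 2 * \<delta> / H" using H0 by (simp add: field_simps)
  finally have q: "1 - 2 * \<delta> / H \<le> 2 * real n + 1 - 2 * x / H" by simp
  have q0: "0 \<le> 1 - 2 * \<delta> / H" using H0 H d1 by (simp add: field_simps)
  have "L * (real n powr (\<kappa> - 1) * (1 - 2 * \<delta> / H)) \<le> L * ((real n + 1) powr (\<kappa> - 1) * (1 - 2 * \<delta> / H))"
  proof -
    have "real n powr (\<kappa> - 1) \<le> (real n + 1) powr (\<kappa> - 1)" using k by (intro powr_mono2) auto
    thus ?thesis using Lpos q0 by (intro mult_left_mono mult_right_mono) auto
  qed
  also have "\<dots> \<le> L * ((real n + 1) powr (\<kappa> - 1) * (2 * real n + 1 - 2 * x / H))"
    using Lpos q by (intro mult_left_mono) auto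
  finally show ?thesis using e p1 by simp
qed

end
end



context P25 begin
context
  fixes n :: nat and \<delta> :: real
  assumes n2: "n \<ge> 2" and d0: "0 < \<delta>" and d1: "\<delta> \<le> 1" and dH: "2 * \<delta> \<le> H - 4"
begin

lemma z_le: "integral\<^sup>L NN (indicator (ZZ n \<delta>)) \<le> c_kappa \<kappa> * exp (aa n \<delta>) * (4 + 2 * \<delta>)"
proof -
  let ?Z1 = "{real n * H - 2 - \<delta> ..< real n * H}"
  let ?Z2 = "{(real n + 1) * H - 2 - \<delta> ..< (real n + 1) * H}"
  let ?c = "c_kappa \<kappa>"
  have "integral\<^sup>L NN (indicator (ZZ n \<delta>)) = (LINT x|lborel. ?c * exp (- (\<bar>x\<bar> powr \<kappa>)) * (exp (Vpot \<kappa> H L K0 x) * indicator (ZZ n \<delta>) x))"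
    by (rule int_N(3)[of _ 1]) (auto simp: indicator_def)
  also have "\<dots> \<le> (LINT x|lborel. ?c * exp (aa n \<delta>) * (indicator ?Z1 x + indicator ?Z2 x))"
  proof (rule integral_mono)
    show "integrable lborel (\<lambda>x. ?c * exp (- (\<bar>x\<bar> powr \<kappa>)) * (exp (Vpot \<kappa> H L K0 x) * indicator (ZZ n \<delta>) x))"
      by (rule int_N(2)[of _ 1]) (auto simp: indicator_def)
    show "integrable lborel (\<lambda>x. ?c * exp (aa n \<delta>) * (indicator ?Z1 x + indicator ?Z2 x))"
      using d0 by (intro integrable_mult_right Bochner_Integration.integrable_add integrable_real_indicator) auto
    fix x
    show "?c * exp (- (\<bar>x\<bar> powr \<kappa>)) * (exp (Vpot \<kappa> H L K0 x) * indicator (ZZ n \<delta>) x)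
        \<le> ?c * exp (aa n \<delta>) * (indicator ?Z1 x + indicator ?Z2 x)"
    proof (cases "x \<in> ZZ n \<delta>")
      case True
      have "exp (- (\<bar>x\<bar> powr \<kappa>)) * exp (Vpot \<kappa> H L K0 x) = exp (- (\<bar>x\<bar> powr \<kappa>) + Vpot \<kappa> H L K0 x)"
        by (simp only: exp_add)
      also have "\<dots> \<le> exp (aa n \<delta>)" using rho_Z[OF n2 d0 d1 dH True] by simp
      finally have r: "exp (- (\<bar>x\<bar> powr \<kappa>)) * exp (Vpot \<kappa> H L K0 x) \<le> exp (aa n \<delta>)" .
      have s1: "1 \<le> indicator ?Z1 x + (indicator ?Z2 x :: real)" using True by (auto simp: indicator_def)
      have "?c * exp (- (\<bar>x\<bar> powr \<kappa>)) * (exp (Vpot \<kappa> H L K0 x) * indicator (ZZ n \<delta>) x)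
          = ?c * (exp (- (\<bar>x\<bar> powr \<kappa>)) * exp (Vpot \<kappa> H L K0 x))" using True by simp
      also have "\<dots> \<le> ?c * exp (aa n \<delta>)" using r c_nonneg by (intro mult_left_mono) auto
      also have "\<dots> \<le> ?c * exp (aa n \<delta>) * (indicator ?Z1 x + indicator ?Z2 x)"
        using mult_left_mono[OF s1, of "?c * exp (aa n \<delta>)"] c_nonneg by simp
      finally show ?thesis .
    next
      case False
      have "0 \<le> ?c * exp (aa n \<delta>) * (indicator ?Z1 x + indicator ?Z2 x)"
        using c_nonneg by (intro mult_nonneg_nonneg add_nonneg_nonneg) auto
      thus ?thesis by (simp only: indicator_simps(2)[OF False] mult_zero_right)
    qed
  qed
  also have "\<dots> = ?c * exp (aa n \<delta>) * (4 + 2 * \<delta>)"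
    using d0 by (simp add: integrable_real_indicator)
  finally show ?thesis .
qed


lemma p_ge: "c_kappa \<kappa> * exp (bb n \<delta>) * \<delta> \<le> integral\<^sup>L NN (indicator (PP n \<delta>))"
proof -
  let ?c = "c_kappa \<kappa>"
  have "?c * exp (bb n \<delta>) * \<delta> = (LINT x|lborel. ?c * exp (bb n \<delta>) * indicator (PP n \<delta>) x)"
    using d0 by simp
  also have "\<dots> \<le> (LINT x|lborel. ?c * exp (- (\<bar>x\<bar> powr \<kappa>)) * (exp (Vpot \<kappa> H L K0 x) * indicator (PP n \<delta>) x))"
  proof (rule integral_mono)
    show "integrable lborel (\<lambda>x. ?c * exp (- (\<bar>x\<bar> powr \<kappa>)) * (exp (Vpot \<kappa> H L K0 x) * indicator (PP n \<delta>) x))"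
      by (rule int_N(2)[of _ 1]) (auto simp: indicator_def)
    show "integrable lborel (\<lambda>x. ?c * exp (bb n \<delta>) * indicator (PP n \<delta>) x)"
      using d0 by (intro integrable_mult_right integrable_real_indicator) auto
    fix x
    show "?c * exp (bb n \<delta>) * indicator (PP n \<delta>) x
        \<le> ?c * exp (- (\<bar>x\<bar> powr \<kappa>)) * (exp (Vpot \<kappa> H L K0 x) * indicator (PP n \<delta>) x)"
    proof (cases "x \<in> PP n \<delta>")
      case True
      have "exp (bb n \<delta>) \<le> exp (- (\<bar>x\<bar> powr \<kappa>) + Vpot \<kappa> H L K0 x)"
        using rho_P[OF n2 d0 d1 dH True] by simp
      also have "\<dots> = exp (- (\<bar>x\<bar> powr \<kappa>)) * exp (Vpot \<kappa> H L K0 x)" by (simp only: exp_add)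
      finally have r: "exp (bb n \<delta>) \<le> exp (- (\<bar>x\<bar> powr \<kappa>)) * exp (Vpot \<kappa> H L K0 x)" .
      have "?c * exp (bb n \<delta>) \<le> ?c * (exp (- (\<bar>x\<bar> powr \<kappa>)) * exp (Vpot \<kappa> H L K0 x))"
        using r c_nonneg by (intro mult_left_mono) auto
      thus ?thesis by (simp only: indicator_simps(1)[OF True] mult_1_right mult.assoc)
    next
      case False
      thus ?thesis by (simp only: indicator_simps(2)[OF False] mult_zero_right order_refl)
    qed
  qed
  also have "\<dots> = integral\<^sup>L NN (indicator (PP n \<delta>))"
    by (rule int_N(3)[of _ 1, symmetric]) (auto simp: indicator_def)
  finally show ?thesis .
qed

lemma diff_ge:
  "real n powr (\<kappa> - 1) * (L * (2 - (4 + 4 * \<delta>) / H) - \<kappa> * (2 + 2 * \<delta>) * (H + \<delta>) powr (\<kappa> - 1))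
     \<le> bb n \<delta> - aa n \<delta>"
proof -
  let ?P = "real n powr (\<kappa> - 1)" and ?Q = "(H + \<delta>) powr (\<kappa> - 1)" and ?R = "(real n * H + \<delta>) powr (\<kappa> - 1)"
  have nH: "8 \<le> real n * H"
  proof -
    have "2 * 4 \<le> real n * H" using n2 H by (intro mult_mono) auto
    thus ?thesis by simp
  qed
  have pos: "0 < real n * H - 2 - \<delta>" using nH d1 by linarith
  have pd: "(real n * H + \<delta>) powr \<kappa> - (real n * H - 2 - \<delta>) powr \<kappa>
      \<le> \<kappa> * ?R * ((real n * H + \<delta>) - (real n * H - 2 - \<delta>))"
    using pos d0 k by (intro powdiff) auto
  have "real n * H + \<delta> \<le> real n * (H + \<delta>)"
  proof -
    have "\<delta> \<le> real n * \<delta>" using n2 d0 by simp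
    thus ?thesis by (simp add: algebra_simps)
  qed
  hence "?R \<le> (real n * (H + \<delta>)) powr (\<kappa> - 1)" using nH k d0 by (intro powr_mono2) auto
  also have "\<dots> = ?P * ?Q" using d0 H by (simp add: powr_mult)
  finally have RPQ: "?R \<le> ?P * ?Q" .
  have "\<kappa> * ?R * ((real n * H + \<delta>) - (real n * H - 2 - \<delta>)) = \<kappa> * (2 + 2 * \<delta>) * ?R" by (simp add: algebra_simps)
  also have "\<dots> \<le> \<kappa> * (2 + 2 * \<delta>) * (?P * ?Q)" using RPQ k d0 by (intro mult_left_mono) auto
  finally have pd2: "(real n * H + \<delta>) powr \<kappa> - (real n * H - 2 - \<delta>) powr \<kappa> \<le> \<kappa> * (2 + 2 * \<delta>) * (?P * ?Q)"
    using pd by linarith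
  have th: "(1 - 2 * \<delta> / H) + \<theta> \<delta> = 2 - (4 + 4 * \<delta>) / H" using H0 by (simp add: field_simps)
  have "bb n \<delta> - aa n \<delta> = L * ?P * ((1 - 2 * \<delta> / H) + \<theta> \<delta>)
      - ((real n * H + \<delta>) powr \<kappa> - (real n * H - 2 - \<delta>) powr \<kappa>)" by (simp add: algebra_simps)
  also have "\<dots> = L * ?P * (2 - (4 + 4 * \<delta>) / H)
      - ((real n * H + \<delta>) powr \<kappa> - (real n * H - 2 - \<delta>) powr \<kappa>)" by (simp only: th)
  finally show ?thesis using pd2 by (simp add: algebra_simps)
qed

end

lemma s_small: "eventually (\<lambda>n. integral\<^sup>L NN (indicator {real n * H - 2 ..} :: real \<Rightarrow> real) < 1/2) sequentially"
proof -
  interpret F: finite_measure NN by (rule finN)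
  let ?A = "\<lambda>n::nat. {real n * H - 2 ..}"
  have "(\<lambda>n. measure NN (?A n)) \<longlonglongrightarrow> measure NN (\<Inter>n. ?A n)"
  proof (rule F.finite_Lim_measure_decseq)
    show "range ?A \<subseteq> sets NN" by auto
    show "decseq ?A" unfolding decseq_def
    proof (intro allI impI subsetI)
      fix m n :: nat and x assume mn: "m \<le> n" and x: "x \<in> ?A n"
      have "real m * H \<le> real n * H" using mn H0 by (intro mult_right_mono) auto
      thus "x \<in> ?A m" using x by auto
    qed
  qed
  moreover have "(\<Inter>n. ?A n) = {}"
  proof (rule ccontr)
    assume "(\<Inter>n. ?A n) \<noteq> {}"
    then obtain x where x: "\<And>n. x \<in> ?A n" by blast
    obtain n :: nat where "x + 3 < real n * H" using reals_Archimedean3[OF H0] by blast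
    thus False using x[of n] by auto
  qed
  ultimately have "(\<lambda>n. measure NN (?A n)) \<longlonglongrightarrow> 0" by simp
  hence "eventually (\<lambda>n. measure NN (?A n) < 1/2) sequentially" by (rule order_tendstoD) simp
  thus ?thesis by simp
qed

end



context P25 begin

definition DD :: "real \<Rightarrow> real" where
  "DD d = L * (2 - (4 + 4 * d) / H) - \<kappa> * (2 + 2 * d) * (H + d) powr (\<kappa> - 1)"

lemma delta_exists: "\<exists>\<delta>. 0 < \<delta> \<and> \<delta> \<le> 1 \<and> 2 * \<delta> \<le> H - 4 \<and> DD \<delta> > 0"
proof -
  have HK: "H powr \<kappa> = H * H powr (\<kappa> - 1)"
    using H0 by (simp add: powr_diff)
  have "L * (H - 2) > \<kappa> * H powr \<kappa>" using L H by (simp add: pos_divide_less_eq)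
  hence "L * (H - 2) > \<kappa> * H * H powr (\<kappa> - 1)" unfolding HK by (simp add: algebra_simps)
  hence "2 * (L * (H - 2)) / H > 2 * (\<kappa> * H * H powr (\<kappa> - 1)) / H"
    using H0 by (intro divide_strict_right_mono) auto
  moreover have "2 * (L * (H - 2)) / H = L * (2 - (4 + 4 * 0) / H)" using H0 by (simp add: field_simps)
  moreover have "2 * (\<kappa> * H * H powr (\<kappa> - 1)) / H = \<kappa> * (2 + 2 * 0) * (H + 0) powr (\<kappa> - 1)"
    using H0 by (simp add: field_simps)
  ultimately have D0: "DD 0 > 0" unfolding DD_def by linarith
  have "(DD \<longlongrightarrow> DD 0) (at_right 0)" unfolding DD_def
    using H0 by (intro tendsto_intros) auto
  hence "eventually (\<lambda>d. DD d > 0) (at_right 0)" using D0 by (rule order_tendstoD)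
  then obtain b where b: "b > 0" "\<And>y. y > 0 \<Longrightarrow> y < b \<Longrightarrow> DD y > 0"
    unfolding eventually_at_right_field by auto
  define \<delta> where "\<delta> = min (b / 2) (min 1 ((H - 4) / 2))"
  have 1: "0 < \<delta>" "\<delta> < b" using b H by (auto simp: \<delta>_def)
  have 2: "\<delta> \<le> 1" by (auto simp: \<delta>_def)
  have "\<delta> \<le> (H - 4) / 2" unfolding \<delta>_def by linarith
  hence 3: "2 * \<delta> \<le> H - 4" by (simp add: field_simps)
  show ?thesis using 1 2 3 b(2) by blast
qed

lemma n_large:
  assumes D: "D > 0"
  shows "eventually (\<lambda>n::nat. M < real n powr (\<kappa> - 1) * D) sequentially"
proof -
  define r where "r = (max 1 (M / D)) powr (1 / (\<kappa> - 1))"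
  obtain N0 :: nat where N0: "r < real N0" using reals_Archimedean2 by blast
  have rr: "r powr (\<kappa> - 1) = max 1 (M / D)"
    unfolding r_def using k by (simp add: powr_powr)
  show ?thesis unfolding eventually_sequentially
  proof (intro exI[of _ N0] allI impI)
    fix n assume "N0 \<le> n"
    hence "r < real n" using N0 by linarith
    hence "r powr (\<kappa> - 1) < real n powr (\<kappa> - 1)" using k by (intro powr_less_mono2) (auto simp: r_def)
    hence "M / D < real n powr (\<kappa> - 1)" unfolding rr by linarith
    thus "M < real n powr (\<kappa> - 1) * D" using D by (simp add: pos_divide_less_eq)
  qed
qed


lemma fails:
  assumes C: "C > 0"
  shows "\<exists>f c. form_closure NN (classA (mu \<kappa>) (qker \<kappa> \<alpha>)) (EV (mu \<kappa>) (qker \<kappa> \<alpha>) (Vpot \<kappa> H L K0)) f c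
          \<and> \<not> ((LINT x|NN. (f x)\<^sup>2) \<le> C * c + (LINT x|NN. f x)\<^sup>2)"
proof -
  obtain \<delta> where d0: "0 < \<delta>" and d1: "\<delta> \<le> 1" and dH: "2 * \<delta> \<le> H - 4" and DDp: "DD \<delta> > 0"
    using delta_exists by blast
  define G where "G = 2 * c_kappa \<kappa> / \<delta>\<^sup>2"
  have G0: "0 \<le> G" using c_nonneg by (simp add: G_def)
  define M where "M = ln (4 * (1 + C * G) * (2 + \<delta>) / \<delta>)"
  have "eventually (\<lambda>n. n \<ge> 2 \<and> integral\<^sup>L NN (indicator {real n * H - 2 ..} :: real \<Rightarrow> real) < 1/2
      \<and> M < real n powr (\<kappa> - 1) * DD \<delta>) sequentially"
    using eventually_ge_at_top[of "2::nat"] s_small n_large[OF DDp, of M] by eventually_elim auto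
  then obtain n where n2: "n \<ge> 2" and sn: "integral\<^sup>L NN (indicator {real n * H - 2 ..} :: real \<Rightarrow> real) < 1/2"
    and Mn: "M < real n powr (\<kappa> - 1) * DD \<delta>"
    unfolding eventually_sequentially by blast
  let ?f = "ff n \<delta>"
  let ?a = "real n * H - 1 - \<delta>" and ?b = "(real n + 1) * H - 1"
  define A where "A = (LINT x|NN. (?f x)\<^sup>2)"
  define B where "B = (LINT x|NN. ?f x)"
  define z where "z = integral\<^sup>L NN (indicator (ZZ n \<delta>) :: real \<Rightarrow> real)"
  define p where "p = integral\<^sup>L NN (indicator (PP n \<delta>) :: real \<Rightarrow> real)"
  define s where "s = integral\<^sup>L NN (indicator {real n * H - 2 ..} :: real \<Rightarrow> real)"
  define E where "E = EV (mu \<kappa>) (qker \<kappa> \<alpha>) (Vpot \<kappa> H L K0) ?f"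
  have fr: "0 \<le> ?f x" "?f x \<le> 1" for x by (rule fn_range)+
  have intf: "integrable NN ?f" by (rule int_N(1)[of _ 1]) (use fr in \<open>auto simp: abs_le_iff\<close>)
  have intf2: "integrable NN (\<lambda>x. (?f x)\<^sup>2)"
    by (rule int_N(1)[of _ 1]) (use fr in \<open>auto simp: abs_le_iff power_le_one\<close>)
  have intZ: "integrable NN (indicator (ZZ n \<delta>) :: real \<Rightarrow> real)" by (rule int_N(1)[of _ 1]) (auto simp: indicator_def)
  have intP: "integrable NN (indicator (PP n \<delta>) :: real \<Rightarrow> real)" by (rule int_N(1)[of _ 1]) (auto simp: indicator_def)
  have intS: "integrable NN (indicator {real n * H - 2 ..} :: real \<Rightarrow> real)" by (rule int_N(1)[of _ 1]) (auto simp: indicator_def)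
  have nH: "8 \<le> real n * H"
  proof -
    have "2 * 4 \<le> real n * H" using n2 H by (intro mult_mono) auto
    thus ?thesis by simp
  qed
  have F1: "p \<le> A" unfolding p_def A_def
  proof (rule integral_mono[OF intP intf2])
    fix x show "indicator (PP n \<delta>) x \<le> (?f x)\<^sup>2"
    proof (cases "x \<in> PP n \<delta>")
      case True
      hence "?a + \<delta> \<le> x" "x \<le> ?b - \<delta>" using H d1 by (auto simp: algebra_simps)
      hence "?f x = 1" using d0 by (intro fn_one) auto
      thus ?thesis using True by simp
    qed simp
  qed
  have "B \<le> (LINT x|NN. (?f x)\<^sup>2 + indicator (ZZ n \<delta>) x)" unfolding B_def
  proof (rule integral_mono[OF intf Bochner_Integration.integrable_add[OF intf2 intZ]])
    fix x show "?f x \<le> (?f x)\<^sup>2 + indicator (ZZ n \<delta>) x"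
    proof (cases "x \<in> ZZ n \<delta>")
      case True
      have i: "indicator (ZZ n \<delta>) x = (1::real)" by (rule indicator_simps(1)[OF True])
      show ?thesis using i fr[of x] zero_le_power2[of "?f x"] by linarith
    next
      case False
      have "real n * H \<le> (real n + 1) * H - 2 - \<delta>" using H d1 by (simp add: algebra_simps)
      hence "x < real n * H - 2 - \<delta> \<or> (real n * H \<le> x \<and> x < (real n + 1) * H - 2 - \<delta>) \<or> (real n + 1) * H \<le> x"
        using False by auto
      hence "?f x = 0 \<or> ?f x = 1"
      proof (elim disjE conjE)
        assume "x < real n * H - 2 - \<delta>" thus ?thesis using d0 by (simp add: fn_zero1)
      next
        assume "real n * H \<le> x" "x < (real n + 1) * H - 2 - \<delta>" thus ?thesis using d0 by (simp add: fn_one)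
      next
        assume "(real n + 1) * H \<le> x" thus ?thesis using d0 by (simp add: fn_zero2)
      qed
      thus ?thesis by auto
    qed
  qed
  also have "\<dots> = A + z" unfolding A_def z_def by (rule Bochner_Integration.integral_add[OF intf2 intZ])
  finally have F2: "B \<le> A + z" .
  have B0: "0 \<le> B" unfolding B_def using fr by simp
  have F3: "B \<le> s" unfolding B_def s_def
  proof (rule integral_mono[OF intf intS])
    fix x show "?f x \<le> indicator {real n * H - 2 ..} x"
    proof (cases "real n * H - 2 \<le> x")
      case True thus ?thesis using fr[of x] by simp
    next
      case False thus ?thesis using d0 d1 by (simp add: fn_zero1)
    qed
  qed
  have z0: "0 \<le> z" unfolding z_def by simp
  have A0: "0 \<le> A" unfolding A_def by simp
  have s0: "0 \<le> s" unfolding s_def by simp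
  have F5: "E \<le> G * z" unfolding E_def G_def z_def by (rule EV_le[OF n2 d0 d1 dH])
  have F6: "s < 1/2" using sn s_def by simp
  have zle: "z \<le> c_kappa \<kappa> * exp (aa n \<delta>) * (4 + 2 * \<delta>)" unfolding z_def by (rule z_le[OF n2 d0 d1 dH])
  have pge: "c_kappa \<kappa> * exp (bb n \<delta>) * \<delta> \<le> p" unfolding p_def by (rule p_ge[OF n2 d0 d1 dH])
  have "M < bb n \<delta> - aa n \<delta>" using Mn diff_ge[OF n2 d0 d1 dH] unfolding DD_def by linarith
  hence "aa n \<delta> + M < bb n \<delta>" by (metis add.commute less_diff_eq)
  hence "exp (aa n \<delta> + M) < exp (bb n \<delta>)" by (rule exp_less_mono)
  moreover have "exp (aa n \<delta> + M) = exp (aa n \<delta>) * (4 * (1 + C * G) * (2 + \<delta>) / \<delta>)"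
    unfolding M_def exp_add using C G0 d0 by (subst exp_ln) (auto intro!: divide_pos_pos mult_pos_pos add_pos_nonneg)
  ultimately have "exp (aa n \<delta>) * (4 * (1 + C * G) * (2 + \<delta>) / \<delta>) < exp (bb n \<delta>)" by simp
  hence "exp (aa n \<delta>) * (4 * (1 + C * G) * (2 + \<delta>)) < exp (bb n \<delta>) * \<delta>"
    using d0 by (simp add: field_simps)
  hence "c_kappa \<kappa> * (exp (aa n \<delta>) * (4 * (1 + C * G) * (2 + \<delta>))) < c_kappa \<kappa> * (exp (bb n \<delta>) * \<delta>)"
    using c_pos by (intro mult_strict_left_mono) auto
  hence "2 * (1 + C * G) * (c_kappa \<kappa> * exp (aa n \<delta>) * (4 + 2 * \<delta>)) < p"
    using pge by (simp add: algebra_simps)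
  moreover have "2 * (1 + C * G) * z \<le> 2 * (1 + C * G) * (c_kappa \<kappa> * exp (aa n \<delta>) * (4 + 2 * \<delta>))"
    using zle C G0 by (intro mult_left_mono) auto
  ultimately have F7: "2 * (1 + C * G) * z < p" by linarith
  have "\<not> (A \<le> C * E + B\<^sup>2)"
  proof
    assume hyp: "A \<le> C * E + B\<^sup>2"
    have "B\<^sup>2 \<le> B * s" unfolding power2_eq_square using B0 F3 by (intro mult_left_mono)
    also have "\<dots> \<le> (A + z) * s" using F2 s0 by (intro mult_right_mono)
    also have "\<dots> \<le> (A + z) * (1/2)" using F6 A0 z0 by (intro mult_left_mono) auto
    finally have b2: "2 * B\<^sup>2 \<le> A + z" by simp
    define X where "X = C * (G * z)"
    have "C * E \<le> X" unfolding X_def using F5 C by (intro mult_left_mono) auto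
    hence h2: "A \<le> 2 * X + z" using hyp b2 by linarith
    have eq: "2 * (1 + C * G) * z = 2 * z + 2 * X" unfolding X_def by (simp add: algebra_simps)
    have h3: "2 * z + 2 * X < p" using F7 by (simp only: eq)
    show False using h2 h3 F1 z0 by linarith
  qed
  hence "\<not> ((LINT x|NN. (?f x)\<^sup>2) \<le> C * E + (LINT x|NN. ?f x)\<^sup>2)" unfolding A_def B_def .
  moreover have "form_closure NN (classA (mu \<kappa>) (qker \<kappa> \<alpha>)) (EV (mu \<kappa>) (qker \<kappa> \<alpha>) (Vpot \<kappa> H L K0)) ?f E"
    unfolding E_def by (rule form_closure_fn[OF d0])
  ultimately show ?thesis by blast
qed

end


theorem proposition2p5:
  fixes \<kappa> \<alpha> H L K0 :: real
  assumes "\<kappa> > 1" and "0 < \<alpha>" and "\<alpha> < 1"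
    and "H > 4" and "L > \<kappa> * H powr \<kappa> / (H - 2)"
    and "(LINT x|mu \<kappa>. exp (Vpot \<kappa> H L K0 x)) = 1"
  shows "(\<exists>C1>0. \<exists>K. \<forall>x::real.
            - C1 * (1 + \<bar>x\<bar> powr (\<kappa> - 1)) - K \<le> Vpot \<kappa> H L K0 x
          \<and> Vpot \<kappa> H L K0 x \<le> C1 * (1 + \<bar>x\<bar> powr (\<kappa> - 1)) + K)
       \<and> (\<forall>C>0. \<exists>f c.
            form_closure (muV (mu \<kappa>) (Vpot \<kappa> H L K0))
              (classA (mu \<kappa>) (qker \<kappa> \<alpha>))
              (EV (mu \<kappa>) (qker \<kappa> \<alpha>) (Vpot \<kappa> H L K0)) f c
          \<and> \<not> ((LINT x|muV (mu \<kappa>) (Vpot \<kappa> H L K0). (f x)\<^sup>2)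
                 \<le> C * c + (LINT x|muV (mu \<kappa>) (Vpot \<kappa> H L K0). f x)\<^sup>2))"
proof -
  interpret P: P25 \<kappa> \<alpha> H L K0 by unfold_locales (use assms in auto)
  have L0: "L > 0" by (rule P.Lpos)
  show ?thesis using part1[OF assms(4) L0 assms(1)] P.fails by blast
qed

end
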